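(* Let $\gamma>0$ and let $\mathcal Q$ be a collection of probability measures on $\{0,1\}^{\mathbb N}$ such that $\mathrm{Mean}(\mathcal Q)$ has no countable $3\gamma$-cover. Then there exist a coordinate $i\in\mathbb N$, a value $r_i\in(0,1)$, and subcollections $\mathcal Q_1,\mathcal Q_2\subseteq\mathcal Q$ such that neither $\mathrm{Mean}(\mathcal Q_1)$ nor $\mathrm{Mean}(\mathcal Q_2)$ has a countable $3\gamma$-cover, every $q\in\mathrm{Mean}(\mathcal Q_1)$ satisfies $q_i\ge r_i+\gamma$, and every $q\in\mathrm{Mean}(\mathcal Q_2)$ satisfies $q_i\le r_i-\gamma$.
   Context: For a probability measure $\mu$ on $\{0,1\}^{\mathbb N}$, $\mathrm{Mean}(\mu)\in[0,1]^{\mathbb N}$ is the vector whose $j$-th coordinate is $\mathbb E[X_j]$ for $X\sim\mu$; $\mathrm{Mean}(\mathcal Q)=\{\mathrm{Mean}(\mu):\mu\in\mathcal Q\}$. For $\varepsilon>0$, a countable $\varepsilon$-cover of $\mathrm{Mean}(\mathcal Q)$ is a countable set $C\subset[0,1]^{\mathbb N}$ such that every $q\in\mathrm{Mean}(\mathcal Q)$ has some $p\in C$ with $\|q-p\|_\infty<\varepsilon$. *)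

theory Defs
  imports "HOL-Probability.Probability"
begin

text \<open>The measurable space {0,1}^N with the product sigma-algebra; bits are modelled as bool
  (True = 1).\<close>
definition cantor_space :: "(nat \<Rightarrow> bool) measure" where
  "cantor_space = PiM UNIV (\<lambda>_::nat. count_space (UNIV :: bool set))"

definition prob_measure_on_cantor :: "(nat \<Rightarrow> bool) measure \<Rightarrow> bool" where
  "prob_measure_on_cantor M \<longleftrightarrow> prob_space M \<and> sets M = sets cantor_space"

definition Mean :: "(nat \<Rightarrow> bool) measure \<Rightarrow> (nat \<Rightarrow> real)" where
  "Mean M = (\<lambda>j. integral\<^sup>L M (\<lambda>x. if x j then 1 else 0))"

definition MeanSet :: "(nat \<Rightarrow> bool) measure set \<Rightarrow> (nat \<Rightarrow> real) set" where
  "MeanSet Q = Mean ` Q"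

definition sup_dist :: "(nat \<Rightarrow> real) \<Rightarrow> (nat \<Rightarrow> real) \<Rightarrow> real" where
  "sup_dist q p = (SUP j. \<bar>q j - p j\<bar>)"

definition has_countable_cover :: "real \<Rightarrow> (nat \<Rightarrow> real) set \<Rightarrow> bool" where
  "has_countable_cover \<epsilon> S \<longleftrightarrow>
     (\<exists>C. countable C \<and> C \<subseteq> {p. \<forall>j. p j \<in> {0..1}} \<and>
          (\<forall>q\<in>S. \<exists>p\<in>C. sup_dist q p < \<epsilon>))"

end

theory Submission
  imports Defs
begin

lemma cov_mono:
  assumes "A \<subseteq> B" "has_countable_cover e B" shows "has_countable_cover e A"
proof -
  from assms(2) obtain C where C: "countable C" "C \<subseteq> {p. \<forall>j. p j \<in> {0..1}}"
    "\<forall>q\<in>B. \<exists>p\<in>C. sup_dist q p < e" unfolding has_countable_cover_def by (elim exE conjE)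
  show ?thesis unfolding has_countable_cover_def
    apply (rule exI[of _ C])
    using C assms(1) by (simp add: subset_iff)
qed

lemma cov_UN:
  assumes K: "countable K" and H: "\<And>k. k \<in> K \<Longrightarrow> has_countable_cover e (A k)"
  shows "has_countable_cover e (\<Union>k\<in>K. A k)"
proof -
  have "\<forall>k\<in>K. \<exists>C. countable C \<and> C \<subseteq> {p. \<forall>j. p j \<in> {0..1}} \<and>
          (\<forall>q\<in>A k. \<exists>p\<in>C. sup_dist q p < e)"
  proof
    fix k assume "k \<in> K"
    from H[OF this] show "\<exists>C. countable C \<and> C \<subseteq> {p. \<forall>j. p j \<in> {0..1}} \<and>
          (\<forall>q\<in>A k. \<exists>p\<in>C. sup_dist q p < e)" unfolding has_countable_cover_def .
  qed
  from bchoice[OF this] obtain C where C0: "\<forall>k\<in>K. countable (C k) \<and> C k \<subseteq> {p. \<forall>j. p j \<in> {0..1}} \<and>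
          (\<forall>q\<in>A k. \<exists>p\<in>C k. sup_dist q p < e)" by blast
  then have C: "\<And>k. k\<in>K \<Longrightarrow> countable (C k) \<and> C k \<subseteq> {p. \<forall>j. p j \<in> {0..1}} \<and>
          (\<forall>q\<in>A k. \<exists>p\<in>C k. sup_dist q p < e)" by blast
  have c1: "countable (\<Union>k\<in>K. C k)" using C K by (intro countable_UN) auto
  have c2: "(\<Union>k\<in>K. C k) \<subseteq> {p. \<forall>j. p j \<in> {0..1}}" using C by blast
  have c3: "\<forall>q\<in>(\<Union>k\<in>K. A k). \<exists>p\<in>(\<Union>k\<in>K. C k). sup_dist q p < e"
  proof
    fix q assume "q \<in> (\<Union>k\<in>K. A k)"
    then obtain k where "k \<in> K" "q \<in> A k" by blast
    then obtain p where "p \<in> C k" "sup_dist q p < e" using C by blast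
    then show "\<exists>p\<in>(\<Union>k\<in>K. C k). sup_dist q p < e" using \<open>k \<in> K\<close> by blast
  qed
  show ?thesis unfolding has_countable_cover_def using c1 c2 c3 by blast
qed

lemma cov_Un: "has_countable_cover e A \<Longrightarrow> has_countable_cover e B \<Longrightarrow> has_countable_cover e (A \<union> B)"
  unfolding has_countable_cover_def
proof (elim exE conjE)
  fix C D assume "countable C" "C \<subseteq> {p. \<forall>j. p j \<in> {0..1}}" "\<forall>q\<in>A. \<exists>p\<in>C. sup_dist q p < e"
    "countable D" "D \<subseteq> {p. \<forall>j. p j \<in> {0..1}}" "\<forall>q\<in>B. \<exists>p\<in>D. sup_dist q p < e"
  then show "\<exists>C. countable C \<and> C \<subseteq> {p. \<forall>j. p j \<in> {0..1}} \<and> (\<forall>q\<in>A \<union> B. \<exists>p\<in>C. sup_dist q p < e)"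
    by (intro exI[of _ "C \<union> D"]) auto
qed

lemma Mean_bounds:
  assumes "prob_measure_on_cantor M"
  shows "0 \<le> Mean M j \<and> Mean M j \<le> 1"
proof -
  have ps: "prob_space M" using assms unfolding prob_measure_on_cantor_def by auto
  have "0 \<le> Mean M j" unfolding Mean_def by (rule integral_nonneg_AE) auto
  moreover have "Mean M j \<le> 1"
  proof (cases "integrable M (\<lambda>x. if x j then 1 else 0 :: real)")
    case True
    then show ?thesis unfolding Mean_def
      by (rule prob_space.integral_le_const[OF ps]) auto
  next
    case False
    then show ?thesis unfolding Mean_def by (simp add: not_integrable_integral_eq)
  qed
  ultimately show ?thesis by simp
qed

theorem mainTheorem11:
  fixes \<gamma> :: real and Q :: "(nat \<Rightarrow> bool) measure set"
  assumes "\<gamma> > 0"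
    and "\<forall>M\<in>Q. prob_measure_on_cantor M"
    and "\<not> has_countable_cover (3 * \<gamma>) (MeanSet Q)"
  shows "\<exists>(i::nat) (r::real) Q1 Q2. r \<in> {0<..<1} \<and> Q1 \<subseteq> Q \<and> Q2 \<subseteq> Q \<and>
           \<not> has_countable_cover (3 * \<gamma>) (MeanSet Q1) \<and>
           \<not> has_countable_cover (3 * \<gamma>) (MeanSet Q2) \<and>
           (\<forall>q\<in>MeanSet Q1. q i \<ge> r + \<gamma>) \<and>
           (\<forall>q\<in>MeanSet Q2. q i \<le> r - \<gamma>)"
proof (rule ccontr)
  assume NG: "\<not> ?thesis"
  define S where "S = MeanSet Q"
  define cov where "cov = has_countable_cover (3 * \<gamma>)"
  define L where "L i r = {q\<in>S. q i \<le> r - \<gamma>}" for i :: nat and r :: real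
  define U where "U i r = {q\<in>S. q i \<ge> r + \<gamma>}" for i :: nat and r :: real
  have Sb: "\<And>q j. q \<in> S \<Longrightarrow> 0 \<le> q j \<and> q j \<le> 1"
    using assms(2) Mean_bounds unfolding S_def MeanSet_def by blast
  have H: "cov (L i r) \<or> cov (U i r)" if "r \<in> {0<..<1}" for i r
  proof (rule ccontr)
    assume a: "\<not> (cov (L i r) \<or> cov (U i r))"
    have e1: "MeanSet {M\<in>Q. Mean M i \<ge> r + \<gamma>} = U i r"
      unfolding U_def S_def MeanSet_def by auto
    have e2: "MeanSet {M\<in>Q. Mean M i \<le> r - \<gamma>} = L i r"
      unfolding L_def S_def MeanSet_def by auto
    have "\<forall>q\<in>MeanSet {M\<in>Q. Mean M i \<ge> r + \<gamma>}. q i \<ge> r + \<gamma>" unfolding MeanSet_def by auto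
    moreover have "\<forall>q\<in>MeanSet {M\<in>Q. Mean M i \<le> r - \<gamma>}. q i \<le> r - \<gamma>" unfolding MeanSet_def by auto
    ultimately show False
      apply -
      apply (rule notE[OF NG])
      apply (rule exI[of _ i], rule exI[of _ r], rule exI[of _ "{M\<in>Q. Mean M i \<ge> r + \<gamma>}"],
          rule exI[of _ "{M\<in>Q. Mean M i \<le> r - \<gamma>}"], intro conjI)
      using that a unfolding e1 e2 cov_def by auto
  qed
  define T where "T i = {r. 0 < r \<and> r < 1 \<and> \<not> cov (L i r)} \<union> {1}" for i
  define t where "t i = Inf (T i)" for i
  have Tne: "T i \<noteq> {}" for i unfolding T_def by auto
  have Tbd: "bdd_below (T i)" for i unfolding T_def by (rule bdd_belowI[of _ 0]) auto
  have t1: "t i \<le> 1" for i unfolding t_def by (rule cInf_lower[OF _ Tbd]) (auto simp: T_def)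
  have t0: "0 \<le> t i" for i unfolding t_def by (rule cInf_greatest[OF Tne]) (auto simp: T_def)
  have Lmono: "L i r \<subseteq> L i s" if "r \<le> s" for i r s using that unfolding L_def by auto
  define K where "K = (UNIV :: nat set) \<times> ((\<rat>::real set) \<inter> {0<..<1})"
  define A where "A = (\<lambda>(i,r). (if cov (L i r) then L i r else {}) \<union> (if cov (U i r) then U i r else {}))"
  define R where "R = {q\<in>S. \<forall>i. \<bar>q i - t i\<bar> \<le> \<gamma>}"
  have Kc: "countable K" unfolding K_def
    by (intro countable_SIGMA) (auto intro: countable_Int1 countable_rat)
  have emp: "cov {}" unfolding cov_def has_countable_cover_def by auto
  have cU: "cov X \<Longrightarrow> cov Y \<Longrightarrow> cov (X \<union> Y)" for X Y unfolding cov_def by (rule cov_Un)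
  have covA: "cov (A k)" if "k \<in> K" for k
    unfolding A_def by (cases k) (auto intro!: cU simp: emp)
  have covR: "cov R"
  proof -
    define p where "p i = max 0 (min 1 (t i))" for i
    have "p = t" using t0 t1 unfolding p_def by (auto simp: fun_eq_iff)
    have "sup_dist q t < 3 * \<gamma>" if "q \<in> R" for q
    proof -
      have "sup_dist q t \<le> \<gamma>" unfolding sup_dist_def
        by (rule cSUP_least) (use that in \<open>auto simp: R_def\<close>)
      then show ?thesis using assms(1) by linarith
    qed
    then show ?thesis unfolding cov_def has_countable_cover_def
      using t0 t1 by (intro exI[of _ "{t}"]) auto
  qed
  have sub: "S \<subseteq> (\<Union>k\<in>K. A k) \<union> R"
  proof
    fix q assume qS: "q \<in> S"
    show "q \<in> (\<Union>k\<in>K. A k) \<union> R"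
    proof (cases "q \<in> R")
      case True then show ?thesis by auto
    next
      case False
      then obtain i where i: "\<bar>q i - t i\<bar> > \<gamma>" using qS unfolding R_def by (auto simp: not_le)
      have qb: "0 \<le> q i" "q i \<le> 1" using Sb[OF qS] by auto
      show ?thesis
      proof (cases "q i < t i - \<gamma>")
        case True
        then obtain r where r: "r \<in> \<rat>" "q i + \<gamma> < r" "r < t i"
          using Rats_dense_in_real[of "q i + \<gamma>" "t i"] by auto
        have r01: "0 < r" "r < 1" using r qb assms(1) t1[of i] by linarith+
        have "cov (L i r)"
        proof (rule ccontr)
          assume "\<not> cov (L i r)"
          then have "r \<in> T i" using r01 unfolding T_def by auto
          then have "t i \<le> r" unfolding t_def by (rule cInf_lower[OF _ Tbd])
          then show False using r by simp
        qed
        moreover have "q \<in> L i r" using qS r unfolding L_def by auto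
        ultimately have "q \<in> A (i, r)" unfolding A_def by auto
        moreover have "(i, r) \<in> K" using r r01 unfolding K_def by auto
        ultimately show ?thesis by blast
      next
        case False
        then have gt: "q i > t i + \<gamma>" using i by linarith
        then obtain r where r: "r \<in> \<rat>" "t i < r" "r < q i - \<gamma>"
          using Rats_dense_in_real[of "t i" "q i - \<gamma>"] by auto
        have r01: "0 < r" "r < 1" using r qb assms(1) t0[of i] by linarith+
        have "Inf (T i) < r" using r t_def by simp
        then obtain s where s: "s \<in> T i" "s < r" using cInf_less_iff[OF Tne Tbd] by blast
        then have "0 < s \<and> s < 1 \<and> \<not> cov (L i s)" using r01 unfolding T_def by auto
        have "\<not> cov (L i r)"
        proof
          assume "cov (L i r)"
          then have "cov (L i s)" using cov_mono[OF Lmono[of s r i]] s(2) unfolding cov_def by simp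
          then show False using \<open>0 < s \<and> s < 1 \<and> \<not> cov (L i s)\<close> by simp
        qed
        then have "cov (U i r)" using H[of r i] r01 by auto
        moreover have "q \<in> U i r" using qS r unfolding U_def by auto
        ultimately have "q \<in> A (i, r)" unfolding A_def by auto
        moreover have "(i, r) \<in> K" using r r01 unfolding K_def by auto
        ultimately show ?thesis by blast
      qed
    qed
  qed
  have "cov ((\<Union>k\<in>K. A k) \<union> R)"
    using cov_Un[OF cov_UN[OF Kc covA[unfolded cov_def]] covR[unfolded cov_def]]
    unfolding cov_def by simp
  then have "cov S" using sub cov_mono unfolding cov_def by blast
  then show False using assms(3) unfolding cov_def S_def by simp
qed

end
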